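(* Let $X$ be a compact subset of $\mathbb{R}$ and $m$ an atom-free Borel probability measure on $X$. For all $p\ge1$, all $h:X\to\mathbb{C}$ and all $\varepsilon>0$, $$\int_X\mathrm{osc}(h,\varepsilon,x)^p\,dm(x)\le2\varepsilon\,\mathrm{Var}_p(h)^p.$$
   Context: $d(x,y)=m(\{z\in X:x\le z\le y\text{ or }y\le z\le x\})$, $B_d(x,\varepsilon)=\{y\in X:d(x,y)<\varepsilon\}$, $\mathrm{osc}(h,\varepsilon,x)=\operatorname{ess\,sup}_m\{|h(y)-h(y')|:y,y'\in B_d(x,\varepsilon)\}$. $\mathrm{Var}_p(h)=\sup\{(\sum_{i=1}^k|h(x_i)-h(x_{i-1})|^p)^{1/p}:k\ge1,\ x_0<x_1<\dots<x_k\text{ in }X\}$. *)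

theory Defs
  imports "HOL-Probability.Probability"
begin

definition epowr :: "ennreal \<Rightarrow> real \<Rightarrow> ennreal" where
  "epowr a p = (if a = top then top else ennreal (enn2real a powr p))"

definition mdist :: "real measure \<Rightarrow> real \<Rightarrow> real \<Rightarrow> real" where
  "mdist m x y = measure m {z \<in> space m. (x \<le> z \<and> z \<le> y) \<or> (y \<le> z \<and> z \<le> x)}"

definition dball :: "real measure \<Rightarrow> real \<Rightarrow> real \<Rightarrow> real set" where
  "dball m x e = {y \<in> space m. mdist m x y < e}"

text \<open>osc(h,e,x): essential supremum (w.r.t. m) of |h y - h y'| for y, y' in B_d(x,e),
  i.e. infimum over m-null sets N of the supremum over y, y' in B_d(x,e) - N.\<close>
definition osc :: "real measure \<Rightarrow> (real \<Rightarrow> complex) \<Rightarrow> real \<Rightarrow> real \<Rightarrow> ennreal" where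
  "osc m h e x = (INF N \<in> {N \<in> sets m. emeasure m N = 0}.
      SUP (y, y') \<in> (dball m x e - N) \<times> (dball m x e - N). ennreal (cmod (h y - h y')))"

definition pvar :: "real set \<Rightarrow> real \<Rightarrow> (real \<Rightarrow> complex) \<Rightarrow> ennreal" where
  "pvar X p h = (SUP (k, xs) \<in> {(k, xs). k \<ge> (1::nat) \<and> strict_mono_on {0..k} (xs :: nat \<Rightarrow> real)
        \<and> (\<forall>i\<le>k. xs i \<in> X)}.
      ennreal ((\<Sum>i=1..k. cmod (h (xs i) - h (xs (i - 1))) powr p) powr (1 / p)))"

end

theory Submission
  imports Defs
begin


fun cs :: "(real \<Rightarrow> complex) \<Rightarrow> real \<Rightarrow> real list \<Rightarrow> real" where
  "cs h p (x # y # ys) = cmod (h y - h x) powr p + cs h p (y # ys)"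
| "cs h p _ = 0"

lemma cs_nonneg: "cs h p L \<ge> 0"
  by (induction h p L rule: cs.induct) auto

lemma cs_cons_ge: "cs h p (x # M) \<ge> cs h p M"
  by (cases M) (auto)

lemma cs_append: "cs h p (L @ M) \<ge> cs h p L + cs h p M"
proof (induction h p L rule: cs.induct)
  case (1 h p x y ys)
  then show ?case by simp
qed (auto simp: cs_cons_ge)

lemma cs_sum: "cs h p L = (\<Sum>i=1..length L - 1. cmod (h (L ! i) - h (L ! (i - 1))) powr p)"
proof (induction h p L rule: cs.induct)
  case (1 h p x y ys)
  have "(\<Sum>i=1..length (x#y#ys) - 1. cmod (h ((x#y#ys) ! i) - h ((x#y#ys) ! (i - 1))) powr p)
     = (\<Sum>i=1..Suc (length ys). cmod (h ((x#y#ys) ! i) - h ((x#y#ys) ! (i - 1))) powr p)" by simp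
  also have "\<dots> = cmod (h y - h x) powr p + (\<Sum>i=Suc 1..Suc (length ys). cmod (h ((x#y#ys) ! i) - h ((x#y#ys) ! (i - 1))) powr p)"
    by (subst sum.atLeast_Suc_atMost) auto
  also have "(\<Sum>i=Suc 1..Suc (length ys). cmod (h ((x#y#ys) ! i) - h ((x#y#ys) ! (i - 1))) powr p)
     = (\<Sum>i=1..length ys. cmod (h ((y#ys) ! i) - h ((y#ys) ! (i - 1))) powr p)"
    by (subst sum.shift_bounds_cl_Suc_ivl) (auto intro!: sum.cong simp: nth_Cons split: nat.splits)
  finally show ?case using 1 by simp
qed auto




definition wterm :: "(real \<Rightarrow> real) \<Rightarrow> real set \<Rightarrow> (real \<Rightarrow> complex) \<Rightarrow> real \<Rightarrow> real \<Rightarrow> real \<Rightarrow> real \<times> real \<Rightarrow> real" where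
  "wterm F X h p e t q = (if fst q \<in> X \<and> snd q \<in> X \<and> \<bar>F (fst q) - t\<bar> < e \<and> \<bar>F (snd q) - t\<bar> < e
      then cmod (h (fst q) - h (snd q)) else 0) powr p"

lemma wterm_nonneg: "wterm F X h p e t q \<ge> 0"
  unfolding wterm_def by simp

lemma windows_bound:
  fixes F :: "real \<Rightarrow> real" and N :: nat and e s p :: real
  assumes mono: "\<And>x y. x \<le> y \<Longrightarrow> F x \<le> F y" and e: "e > 0"
  shows "\<exists>L. sorted_wrt (<) L \<and> set L \<subseteq> X \<and> (\<forall>z\<in>set L. F z < s + 2*e*N - e) \<and>
    (\<Sum>n<N. wterm F X h p e (s + 2*e*n) (c n)) \<le> cs h p L"
proof (induction N)
  case 0
  show ?case by (intro exI[of _ "[]"]) auto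
next
  case (Suc N)
  then obtain L where L: "sorted_wrt (<) L" "set L \<subseteq> X" "\<forall>z\<in>set L. F z < s + 2*e*N - e"
    "(\<Sum>n<N. wterm F X h p e (s + 2*e*n) (c n)) \<le> cs h p L" by blast
  define t where "t = s + 2*e*N"
  obtain y y' where c: "c N = (y, y')" by fastforce
  show ?case
  proof (cases "y \<in> X \<and> y' \<in> X \<and> \<bar>F y - t\<bar> < e \<and> \<bar>F y' - t\<bar> < e \<and> y \<noteq> y'")
    case True
    define a where "a = min y y'"
    define b where "b = max y y'"
    have ab: "a < b" "a \<in> X" "b \<in> X" "\<bar>F a - t\<bar> < e" "\<bar>F b - t\<bar> < e"
      using True by (auto simp: a_def b_def min_def max_def)
    have w: "wterm F X h p e t (c N) = cmod (h b - h a) powr p"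
      using True c unfolding wterm_def a_def b_def
      by (cases "y \<le> y'") (auto simp: min_def max_def norm_minus_commute)
    have lt: "z < a" if "z \<in> set L" for z
    proof (rule ccontr)
      assume "\<not> z < a"
      then have "F a \<le> F z" using mono by auto
      moreover have "F z < t - e" using L(3) that t_def by auto
      ultimately show False using ab(4) by auto
    qed
    have sorted: "sorted_wrt (<) (L @ [a, b])"
      using L(1) ab(1) lt by (auto simp: sorted_wrt_append intro: less_trans)
    have "(\<Sum>n<Suc N. wterm F X h p e (s + 2*e*n) (c n)) \<le> cs h p L + cs h p [a, b]"
      using L(4) w t_def by simp
    also have "\<dots> \<le> cs h p (L @ [a, b])" by (rule cs_append)
    finally have s1: "(\<Sum>n<Suc N. wterm F X h p e (s + 2*e*n) (c n)) \<le> cs h p (L @ [a, b])" .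
    have s2: "\<forall>z\<in>set (L @ [a,b]). F z < s + 2*e*(Suc N) - e"
    proof
      fix z assume z: "z \<in> set (L @ [a,b])"
      have "F z < t + e"
      proof (cases "z \<in> set L")
        case True
        then show ?thesis using L(3) t_def e by fastforce
      next
        case False
        then show ?thesis using z ab by auto
      qed
      then show "F z < s + 2*e*(Suc N) - e" using t_def by (simp add: algebra_simps)
    qed
    have s3: "set (L @ [a,b]) \<subseteq> X" using L(2) ab by auto
    show ?thesis using sorted s1 s2 s3 by blast
  next
    case False
    have w: "wterm F X h p e t (c N) = 0"
      using False c unfolding wterm_def by auto
    have s1: "(\<Sum>n<Suc N. wterm F X h p e (s + 2*e*n) (c n)) \<le> cs h p L"
      using L(4) w t_def by simp
    have s2: "\<forall>z\<in>set L. F z < s + 2*e*(Suc N) - e"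
    proof
      fix z assume "z \<in> set L"
      then have "F z < s + 2*e*N - e" using L(3) by auto
      also have "\<dots> \<le> s + 2*e*(Suc N) - e" using e by (simp add: algebra_simps)
      finally show "F z < s + 2*e*(Suc N) - e" .
    qed
    show ?thesis
      using L(1,2) s1 s2 by blast
  qed
qed

lemma cs_le_pvar:
  assumes "sorted_wrt (<) L" "set L \<subseteq> X" "p \<ge> 1"
  shows "ennreal (cs h p L) \<le> epowr (pvar X p h) p"
proof (cases "length L \<ge> 2")
  case False
  then have "cs h p L = 0" by (simp add: cs_sum)
  then show ?thesis by simp
next
  case True
  define k where "k = length L - 1"
  have mem: "(k, (!) L) \<in> {(k, xs). k \<ge> (1::nat) \<and> strict_mono_on {0..k} (xs :: nat \<Rightarrow> real)
        \<and> (\<forall>i\<le>k. xs i \<in> X)}"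
  proof -
    have "k \<ge> 1" using True k_def by simp
    moreover have "strict_mono_on {0..k} ((!) L)"
    proof (rule strict_mono_onI)
      fix i j assume "i \<in> {0..k}" "j \<in> {0..k}" "i < j"
      then show "L ! i < L ! j" using assms(1) k_def True
        by (simp add: sorted_wrt_iff_nth_less)
    qed
    moreover have "\<forall>i\<le>k. L ! i \<in> X"
      using assms(2) k_def True by (auto intro!: subsetD[OF assms(2)] nth_mem)
    ultimately show ?thesis by simp
  qed
  have "ennreal (cs h p L powr (1/p)) \<le> pvar X p h"
    unfolding pvar_def cs_sum k_def[symmetric]
    by (rule SUP_upper2[OF mem]) simp
  then show ?thesis
  proof (cases "pvar X p h = top")
    case False
    have c0: "cs h p L \<ge> 0" by (rule cs_nonneg)
    with \<open>ennreal (cs h p L powr (1/p)) \<le> pvar X p h\<close> False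
    have "cs h p L powr (1/p) \<le> enn2real (pvar X p h)"
    proof -
      have "pvar X p h = ennreal (enn2real (pvar X p h))" using False
        by (simp add: ennreal_enn2real_if)
      then show ?thesis using \<open>ennreal (cs h p L powr (1/p)) \<le> pvar X p h\<close>
        by (metis enn2real_nonneg ennreal_le_iff)
    qed
    then have "(cs h p L powr (1/p)) powr p \<le> enn2real (pvar X p h) powr p"
      using assms(3) by (intro powr_mono2) auto
    also have "(cs h p L powr (1/p)) powr p = cs h p L"
      using assms(3) c0 by (simp add: powr_powr)
    finally show ?thesis using False unfolding epowr_def by simp
  qed (simp add: epowr_def)
qed




lemma sum_SUP_ennreal:
  fixes f :: "nat \<Rightarrow> 'b \<Rightarrow> ennreal"
  shows "(\<Sum>n<N. SUP q. f n q) = (SUP c. \<Sum>n<N. f n (c n))"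
proof (induction N)
  case 0
  then show ?case by simp
next
  case (Suc N)
  have "(\<Sum>n<Suc N. SUP q. f n q) = (SUP c. \<Sum>n<N. f n (c n)) + (SUP q. f N q)"
    using Suc by simp
  also have "\<dots> = (SUP q. (SUP c. \<Sum>n<N. f n (c n)) + f N q)"
    by (rule ennreal_SUP_add_right) simp
  also have "\<dots> = (SUP q. SUP c. (\<Sum>n<N. f n (c n)) + f N q)"
    by (simp add: ennreal_SUP_add_left)
  also have "\<dots> = (SUP c. SUP q. (\<Sum>n<N. f n (c n)) + f N q)"
    by (rule SUP_commute)
  also have "\<dots> = (SUP c. \<Sum>n<Suc N. f n (c n))"
  proof (rule antisym)
    show "(SUP c. SUP q. (\<Sum>n<N. f n (c n)) + f N q) \<le> (SUP c. \<Sum>n<Suc N. f n (c n))"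
    proof (intro SUP_least)
      fix c q
      have eq: "(\<Sum>n<N. f n (c n)) + f N q = (\<Sum>n<Suc N. f n ((c(N := q)) n))"
        by simp
      show "(\<Sum>n<N. f n (c n)) + f N q \<le> (SUP c. \<Sum>n<Suc N. f n (c n))"
        unfolding eq by (rule SUP_upper) simp
    qed
  next
    show "(SUP c. \<Sum>n<Suc N. f n (c n)) \<le> (SUP c. SUP q. (\<Sum>n<N. f n (c n)) + f N q)"
    proof (intro SUP_least)
      fix c
      have "(\<Sum>n<Suc N. f n (c n)) = (\<Sum>n<N. f n (c n)) + f N (c N)" by simp
      also have "\<dots> \<le> (SUP q. (\<Sum>n<N. f n (c n)) + f N q)" by (rule SUP_upper) simp
      also have "\<dots> \<le> (SUP c. SUP q. (\<Sum>n<N. f n (c n)) + f N q)" by (rule SUP_upper) simp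
      finally show "(\<Sum>n<Suc N. f n (c n)) \<le> \<dots>" .
    qed
  qed
  finally show ?case .
qed

definition Gw :: "(real \<Rightarrow> real) \<Rightarrow> real set \<Rightarrow> (real \<Rightarrow> complex) \<Rightarrow> real \<Rightarrow> real \<Rightarrow> real \<Rightarrow> ennreal" where
  "Gw F X h p e t = (SUP q. ennreal (wterm F X h p e t q))"

lemma Gw_sum_bound:
  fixes F :: "real \<Rightarrow> real" and N :: nat and e s p :: real
  assumes mono: "\<And>x y. x \<le> y \<Longrightarrow> F x \<le> F y" and e: "e > 0" and p: "p \<ge> 1"
  shows "(\<Sum>n<N. Gw F X h p e (s + 2*e*n)) \<le> epowr (pvar X p h) p"
proof -
  have "(\<Sum>n<N. Gw F X h p e (s + 2*e*n)) = (SUP c. \<Sum>n<N. ennreal (wterm F X h p e (s + 2*e*n) (c n)))"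
    unfolding Gw_def by (rule sum_SUP_ennreal)
  also have "\<dots> \<le> epowr (pvar X p h) p"
  proof (rule SUP_least)
    fix c :: "nat \<Rightarrow> real \<times> real"
    obtain L where L: "sorted_wrt (<) L" "set L \<subseteq> X"
      "(\<Sum>n<N. wterm F X h p e (s + 2*e*n) (c n)) \<le> cs h p L"
      using windows_bound[where F=F and e=e and N=N and s=s and X=X and h=h and p=p and c=c, OF mono e] by blast
    have "(\<Sum>n<N. ennreal (wterm F X h p e (s + 2*e*n) (c n))) = ennreal (\<Sum>n<N. wterm F X h p e (s + 2*e*n) (c n))"
      by (rule sum_ennreal) (rule wterm_nonneg)
    also have "\<dots> \<le> ennreal (cs h p L)" using L(3) by (rule ennreal_leI)
    also have "\<dots> \<le> epowr (pvar X p h) p" by (rule cs_le_pvar[OF L(1,2) p])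
    finally show "(\<Sum>n<N. ennreal (wterm F X h p e (s + 2*e*n) (c n))) \<le> epowr (pvar X p h) p" .
  qed
  finally show ?thesis .
qed

lemma epowr_mono:
  assumes "a \<le> b" "p \<ge> 0"
  shows "epowr a p \<le> epowr b p"
proof (cases "b = top")
  case False
  have "a \<noteq> top"
  proof
    assume "a = top"
    with assms(1) have "b = top" by (simp add: top_unique)
    with False show False by simp
  qed
  moreover have "enn2real a \<le> enn2real b" using assms(1) False by (simp add: enn2real_mono less_top)
  ultimately show ?thesis using False assms(2)
    unfolding epowr_def by (simp add: ennreal_leI powr_mono2)
qed (simp add: epowr_def)

lemma epowr_SUP:
  fixes r :: "'b \<Rightarrow> real"
  assumes r: "\<And>i. r i \<ge> 0" and p: "p > 0"
  shows "epowr (SUP i. ennreal (r i)) p \<le> (SUP i. ennreal (r i powr p))"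
proof -
  define T0 where "T0 = (SUP i. ennreal (r i powr p))"
  define S0 where "S0 = (SUP i. ennreal (r i))"
  have "epowr S0 p \<le> T0"
  proof (cases "T0 = top")
    case False
    define \<tau> where "\<tau> = enn2real T0"
    have \<tau>0: "\<tau> \<ge> 0" unfolding \<tau>_def by simp
    have T: "T0 = ennreal \<tau>"
      unfolding \<tau>_def using False by (simp add: less_top)
    have ri: "r i \<le> \<tau> powr (1/p)" for i
    proof -
      have "ennreal (r i powr p) \<le> T0" unfolding T0_def by (rule SUP_upper) simp
      then have "ennreal (r i powr p) \<le> ennreal \<tau>" unfolding T .
      then have "r i powr p \<le> \<tau>" using \<tau>0 by (simp add: ennreal_le_iff)
      then have "(r i powr p) powr (1/p) \<le> \<tau> powr (1/p)" using p by (intro powr_mono2) auto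
      then show ?thesis using p r[of i] by (simp add: powr_powr)
    qed
    have S: "S0 \<le> ennreal (\<tau> powr (1/p))"
      unfolding S0_def by (rule SUP_least) (simp add: ri ennreal_leI)
    have Sfin: "S0 \<noteq> top"
    proof
      assume "S0 = top"
      with S have "ennreal (\<tau> powr (1/p)) = top" by (simp add: top_unique)
      then show False by simp
    qed
    have "enn2real S0 \<le> enn2real (ennreal (\<tau> powr (1/p)))"
      using S by (rule enn2real_mono) simp
    then have "enn2real S0 \<le> \<tau> powr (1/p)" by simp
    then have "enn2real S0 powr p \<le> (\<tau> powr (1/p)) powr p"
      using p by (intro powr_mono2) auto
    also have "\<dots> = \<tau>" using p \<tau>0 by (simp add: powr_powr)
    finally have "enn2real S0 powr p \<le> \<tau>" .
    then show ?thesis using Sfin T unfolding epowr_def by (simp add: ennreal_leI)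
  next
    case True
    then show ?thesis by simp
  qed
  then show ?thesis unfolding S0_def T0_def .
qed




lemma Gw_measurable[measurable]: "Gw F X h p e \<in> borel_measurable borel"
proof (rule borel_measurableI_greater)
  fix y :: ennreal
  define Q where "Q = {q. fst q \<in> X \<and> snd q \<in> X \<and> y < ennreal (cmod (h (fst q) - h (snd q)) powr p)}"
  have eq: "{t \<in> space borel. y < Gw F X h p e t} =
    (\<Union>q\<in>Q. ball (F (fst q)) e \<inter> ball (F (snd q)) e)"
    unfolding Gw_def less_SUP_iff wterm_def Q_def
    apply (auto simp: dist_real_def split: if_splits)
    by blast+
  show "{t \<in> space borel. y < Gw F X h p e t} \<in> sets borel"
    unfolding eq by (intro borel_open open_UN ballI open_Int open_ball)
qed

context
  fixes X :: "real set" and m :: "real measure"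
  assumes cX: "compact X"
    and sm: "sets m = sets (restrict_space borel X)"
    and pm: "prob_space m"
    and atom: "\<And>x. x \<in> X \<Longrightarrow> emeasure m {x} = 0"
begin

lemma space_m: "space m = X"
  using sets_eq_imp_space_eq[OF sm] by (simp add: space_restrict_space)

lemma X_borel: "X \<in> sets borel"
  using cX by (simp add: compact_imp_closed borel_closed)

lemma meas_cong: "measurable m N = measurable (restrict_space borel X) N"
  by (rule measurable_cong_sets[OF sm refl])

lemma id_meas: "(\<lambda>x. x) \<in> measurable m borel"
  unfolding meas_cong by (rule measurable_restrict_space1) simp

definition M' where "M' = distr m borel (\<lambda>x. x)"

lemma rd: "real_distribution M'"
  unfolding M'_def using id_meas
  by (intro prob_space.real_distribution_distr[OF pm]) simp

lemma fbm: "finite_borel_measure M'"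
  using rd by (rule real_distribution.finite_borel_measure_M)

lemma measure_M': "A \<in> sets borel \<Longrightarrow> measure M' A = measure m (A \<inter> X)"
  unfolding M'_def using id_meas by (simp add: measure_distr space_m)

lemma measure_M'_single: "measure M' {x} = 0"
proof (cases "x \<in> X")
  case True
  then have "{x} \<inter> X = {x}" by auto
  then have "measure M' {x} = measure m {x}" using measure_M'[of "{x}"] by simp
  then show ?thesis using atom[OF True] by (simp add: measure_def)
next
  case False
  then have "{x} \<inter> X = {}" by auto
  then show ?thesis by (simp add: measure_M')
qed

definition F where "F = cdf M'"

lemma F_cont: "isCont F x"
  unfolding F_def using measure_M'_single by (simp add: finite_borel_measure.isCont_cdf[OF fbm])

lemma F_cont_on: "continuous_on S F"
  using F_cont by (simp add: continuous_at_imp_continuous_on)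

lemma F_mono: "x \<le> y \<Longrightarrow> F x \<le> F y"
  unfolding F_def by (rule finite_borel_measure.cdf_nondecreasing[OF fbm])

lemma F_nonneg: "F x \<ge> 0"
  unfolding F_def by (rule finite_borel_measure.cdf_nonneg[OF fbm])

lemma F_le1: "F x \<le> 1"
  unfolding F_def by (rule real_distribution.cdf_bounded_prob[OF rd])

lemma F_meas: "F \<in> borel_measurable m"
  unfolding meas_cong
  by (rule measurable_restrict_space1) (rule borel_measurable_continuous_onI[OF F_cont_on])

lemma measure_Icc: "x \<le> y \<Longrightarrow> measure M' {x..y} = F y - F x"
proof (cases "x = y")
  case True
  then show ?thesis using measure_M'_single by simp
next
  case False
  assume xy: "x \<le> y"
  then have lt: "x < y" using False by simp
  have eq: "{x..y} = {x<..y} \<union> {x}" using lt by auto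
  have "measure M' ({x<..y} \<union> {x}) = measure M' {x<..y} + measure M' {x}"
    by (rule finite_measure.finite_measure_Union[OF finite_borel_measure.axioms(1)[OF fbm]])
       (auto intro: finite_borel_measure.sets_M[OF fbm])
  then have "measure M' {x..y} = measure M' {x<..y} + measure M' {x}"
    by (simp only: eq)
  also have "\<dots> = F y - F x"
    using finite_borel_measure.cdf_diff_eq[OF fbm lt] measure_M'_single unfolding F_def by simp
  finally show ?thesis .
qed

lemma mdist_F: "mdist m x y = \<bar>F x - F y\<bar>"
proof -
  have "{z \<in> space m. (x \<le> z \<and> z \<le> y) \<or> (y \<le> z \<and> z \<le> x)} = {min x y..max x y} \<inter> X"
    by (auto simp: space_m)
  then have "mdist m x y = measure M' {min x y..max x y}"
    unfolding mdist_def by (simp add: measure_M')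
  also have "\<dots> = \<bar>F x - F y\<bar>"
    using F_mono by (cases "x \<le> y") (simp_all add: measure_Icc min_def max_def)
  finally show ?thesis .
qed


lemma X_ne: "X \<noteq> {}"
  using prob_space.not_empty[OF pm] space_m by simp

lemma X_bounds: "\<exists>lo hi. (\<forall>x\<in>X. lo \<le> x \<and> x \<le> hi) \<and> lo \<le> hi"
proof -
  obtain a where a: "\<forall>x\<in>X. \<bar>x\<bar> \<le> a" using compact_imp_bounded[OF cX] bounded_real by auto
  obtain x0 where "x0 \<in> X" using X_ne by auto
  then have "-a \<le> a" using a by force
  show ?thesis
  proof (intro exI conjI)
    show "\<forall>x\<in>X. - a \<le> x \<and> x \<le> a" using a by (auto simp: abs_le_iff)
  qed fact
qed

lemma F_eq: "F x = measure m ({..x} \<inter> X)"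
  unfolding F_def cdf_def by (simp add: measure_M')

lemma cdf_D: "cdf (distr m borel F) t = (if t < 0 then 0 else if t < 1 then t else 1)"
proof -
  have "cdf (distr m borel F) t = measure m (F -` {..t} \<inter> space m)"
    unfolding cdf_def using F_meas by (simp add: measure_distr)
  also have "F -` {..t} \<inter> space m = {x \<in> X. F x \<le> t}" by (auto simp: space_m)
  finally have eq: "cdf (distr m borel F) t = measure m {x \<in> X. F x \<le> t}" .
  obtain lo hi where lh: "\<And>x. x \<in> X \<Longrightarrow> lo \<le> x \<and> x \<le> hi" "lo \<le> hi" using X_bounds by blast
  have Flo: "F (lo - 1) = 0"
  proof -
    have "{..lo - 1} \<inter> X = {}" using lh by force
    then show ?thesis by (simp add: F_eq)
  qed
  have Fhi: "F hi = 1"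
  proof -
    have "{..hi} \<inter> X = X" using lh by force
    then show ?thesis using prob_space.prob_space[OF pm] by (simp add: F_eq space_m)
  qed
  show ?thesis
  proof (cases "t < 0")
    case True
    then have "{x \<in> X. F x \<le> t} = {}" using F_nonneg by (auto simp: not_le intro: less_le_trans)
    then show ?thesis using eq True by (simp only:) simp
  next
    case t0: False
    show ?thesis
    proof (cases "t < 1")
      case False
      then have "{x \<in> X. F x \<le> t} = X" using F_le1 False by (auto intro: order_trans[of _ 1])
      then show ?thesis using eq False t0 prob_space.prob_space[OF pm] space_m by simp
    next
      case t1: True
      define K where "K = {lo - 1..hi} \<inter> {x. F x = (\<lambda>_. t) x}"
      have "closed {x. F x = (\<lambda>_. t) x}"
        by (rule closed_Collect_eq[OF F_cont_on]) simp
      then have cK: "compact K" unfolding K_def by (intro compact_Int_closed) auto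
      have "\<exists>x. lo - 1 \<le> x \<and> x \<le> hi \<and> F x = t"
        by (rule IVT') (use Flo Fhi t0 t1 lh(2) F_cont_on in auto)
      then have "K \<noteq> {}" unfolding K_def by auto
      then obtain c where c: "c \<in> K" "\<And>y. y \<in> K \<Longrightarrow> y \<le> c"
        using compact_attains_sup[OF cK] by blast
      have Fc: "F c = t" using c(1) unfolding K_def by simp
      have set_eq: "{x \<in> X. F x \<le> t} = {..c} \<inter> X"
      proof safe
        fix x assume x: "x \<in> X" "F x \<le> t"
        show "x \<le> c"
        proof (rule ccontr)
          assume "\<not> x \<le> c"
          then have "F c \<le> F x" using F_mono by simp
          then have "F x = t" using Fc x by simp
          then have "x \<in> K" unfolding K_def using lh(1)[OF x(1)] by auto
          then show False using c(2) \<open>\<not> x \<le> c\<close> by auto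
        qed
      next
        fix x assume "x \<in> X" "x \<le> c"
        then show "F x \<le> t" using F_mono Fc by auto
      qed
      have "measure m {x \<in> X. F x \<le> t} = F c" using set_eq F_eq[of c] by simp
      then show ?thesis using eq Fc t0 t1 by simp
    qed
  qed
qed

definition N2 :: "real measure" where "N2 = density lborel (indicator {0..1})"

lemma N2_emeasure: "A \<in> sets borel \<Longrightarrow> emeasure N2 A = emeasure lborel ({0..1} \<inter> A)"
proof -
  assume A: "A \<in> sets borel"
  have "emeasure N2 A = (\<integral>\<^sup>+x. indicator {0..1} x * indicator A x \<partial>lborel)"
    unfolding N2_def using A by (simp add: emeasure_density)
  also have "\<dots> = (\<integral>\<^sup>+x. indicator ({0..1} \<inter> A) x \<partial>lborel)"
    by (rule nn_integral_cong) (simp split: split_indicator)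
  also have "\<dots> = emeasure lborel ({0..1} \<inter> A)" using A by simp
  finally show ?thesis .
qed

lemma rd_N2: "real_distribution N2"
proof -
  have "prob_space N2"
  proof (rule prob_spaceI)
    have "space N2 = UNIV" unfolding N2_def by simp
    then show "emeasure N2 (space N2) = 1" by (simp add: N2_emeasure)
  qed
  then show ?thesis unfolding real_distribution_def real_distribution_axioms_def
    by (simp add: N2_def)
qed

lemma cdf_N2: "cdf N2 t = (if t < 0 then 0 else if t < 1 then t else 1)"
proof -
  have "cdf N2 t = enn2real (emeasure lborel ({0..1} \<inter> {..t}))"
    unfolding cdf_def measure_def by (simp add: N2_emeasure)
  also have "\<dots> = (if t < 0 then 0 else if t < 1 then t else 1)"
  proof -
    have "t < 0 \<Longrightarrow> {0..1} \<inter> {..t} = ({}::real set)" by auto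
    moreover have "0 \<le> t \<Longrightarrow> t < 1 \<Longrightarrow> {0..1} \<inter> {..t} = {0..t}" by auto
    moreover have "1 \<le> t \<Longrightarrow> {0..1} \<inter> {..t} = {0..(1::real)}" by auto
    ultimately show ?thesis by auto
  qed
  finally show ?thesis .
qed

lemma distr_F: "distr m borel F = N2"
  by (rule cdf_unique) (use prob_space.real_distribution_distr[OF pm] F_meas rd_N2 cdf_D cdf_N2 in auto)

end



lemma int_bound:
  fixes F :: "real \<Rightarrow> real" and e p :: real
  assumes mono: "\<And>x y. x \<le> y \<Longrightarrow> F x \<le> F y" and e: "e > 0" and p: "p \<ge> 1"
  shows "(\<integral>\<^sup>+t. indicator {0..1} t * Gw F X h p e t \<partial>lborel) \<le> ennreal (2*e) * epowr (pvar X p h) p"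
proof -
  define \<delta> where "\<delta> = 2*e"
  have \<delta>: "\<delta> > 0" using e \<delta>_def by simp
  define A where "A n = {\<delta> * real n ..< \<delta> * real n + \<delta>}" for n :: nat
  define H where "H t = indicator {0..1::real} t * Gw F X h p e t" for t
  define V where "V = epowr (pvar X p h) p"
  have Gm: "Gw F X h p e \<in> borel_measurable borel" by (rule Gw_measurable)
  have Hm[measurable]: "H \<in> borel_measurable borel" unfolding H_def using Gm by measurable
  have disj: "disjoint_family A"
    unfolding disjoint_family_on_def
  proof (intro ballI impI)
    fix i j :: nat assume "i \<noteq> j"
    show "A i \<inter> A j = {}"
    proof (rule ccontr)
      assume "A i \<inter> A j \<noteq> {}"
      then obtain x where "x \<in> A i" "x \<in> A j" by blast
      then have x: "\<delta> * i \<le> x" "x < \<delta> * i + \<delta>" "\<delta> * j \<le> x" "x < \<delta> * j + \<delta>"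
        unfolding A_def by auto
      have "\<delta> * i < \<delta> * (j + 1)" using x by (simp add: algebra_simps)
      then have "real i < real j + 1" using \<delta> by (simp add: mult_less_cancel_left_pos)
      moreover have "\<delta> * j < \<delta> * (i + 1)" using x by (simp add: algebra_simps)
      then have "real j < real i + 1" using \<delta> by (simp add: mult_less_cancel_left_pos)
      ultimately show False using \<open>i \<noteq> j\<close> by linarith
    qed
  qed
  have UN: "(\<Union>n. A n) = {0..}"
  proof safe
    fix x n assume "x \<in> A n"
    then have "\<delta> * real n \<le> x" unfolding A_def by auto
    moreover have "0 \<le> \<delta> * real n" using \<delta> by simp
    ultimately show "0 \<le> x" by linarith
  next
    fix x :: real assume x: "0 \<le> x"
    define n where "n = nat \<lfloor>x / \<delta>\<rfloor>"
    have "real n = of_int \<lfloor>x / \<delta>\<rfloor>" using x \<delta> unfolding n_def by simp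
    then have "real n \<le> x / \<delta>" "x / \<delta> < real n + 1" by linarith+
    then have "\<delta> * n \<le> x" "x < \<delta> * n + \<delta>" using \<delta> by (simp_all add: field_simps)
    then show "x \<in> (\<Union>n. A n)" unfolding A_def by auto
  qed
  have pw: "H t = (\<Sum>n. H t * indicator (A n) t)" for t
  proof -
    have "(\<Sum>n. H t * indicator (A n) t) = H t * indicator {0..} t"
      using suminf_indicator[OF disj, of t] UN by simp
    also have "\<dots> = H t" unfolding H_def by (simp split: split_indicator)
    finally show ?thesis by simp
  qed
  have shift: "(\<integral>\<^sup>+t. H t * indicator (A n) t \<partial>lborel) = (\<integral>\<^sup>+s. H (\<delta> * n + s) * indicator {0..<\<delta>} s \<partial>lborel)" for n
  proof -
    define c where "c = \<delta> * real n"
    have "(\<integral>\<^sup>+t. H t * indicator (A n) t \<partial>lborel) = (\<integral>\<^sup>+t. H t * indicator (A n) t \<partial>(distr lborel borel ((+) c)))"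
      by (simp add: lborel_distr_plus)
    also have "\<dots> = (\<integral>\<^sup>+s. H (c + s) * indicator (A n) (c + s) \<partial>lborel)"
      by (rule nn_integral_distr) (auto simp: A_def)
    also have "\<dots> = (\<integral>\<^sup>+s. H (\<delta> * n + s) * indicator {0..<\<delta>} s \<partial>lborel)"
      by (rule nn_integral_cong) (simp add: A_def c_def split: split_indicator)
    finally show ?thesis .
  qed
  have bound: "(\<Sum>n. H (\<delta> * n + s) * indicator {0..<\<delta>} s) \<le> V * indicator {0..<\<delta>} s" for s
  proof -
    have "(\<Sum>n. H (\<delta> * n + s)) \<le> V"
      unfolding suminf_eq_SUP
    proof (rule SUP_least)
      fix N :: nat
      have "(\<Sum>n<N. H (\<delta> * n + s)) \<le> (\<Sum>n<N. Gw F X h p e (s + 2*e*n))"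
        by (rule sum_mono) (simp add: H_def \<delta>_def algebra_simps split: split_indicator)
      also have "\<dots> \<le> V" unfolding V_def using Gw_sum_bound[where F=F and e=e and p=p and N=N and s=s and X=X and h=h] mono e p by blast
      finally show "(\<Sum>n<N. H (\<delta> * n + s)) \<le> V" .
    qed
    then show ?thesis by (simp add: mult_right_mono)
  qed
  have "(\<integral>\<^sup>+t. H t \<partial>lborel) = (\<integral>\<^sup>+t. (\<Sum>n. H t * indicator (A n) t) \<partial>lborel)"
    using pw by simp
  also have "\<dots> = (\<Sum>n. \<integral>\<^sup>+t. H t * indicator (A n) t \<partial>lborel)"
    by (rule nn_integral_suminf) (simp add: A_def)
  also have "\<dots> = (\<Sum>n. \<integral>\<^sup>+s. H (\<delta> * n + s) * indicator {0..<\<delta>} s \<partial>lborel)"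
    using shift by simp
  also have "\<dots> = (\<integral>\<^sup>+s. (\<Sum>n. H (\<delta> * n + s) * indicator {0..<\<delta>} s) \<partial>lborel)"
    by (rule nn_integral_suminf[symmetric]) simp
  also have "\<dots> \<le> (\<integral>\<^sup>+s. V * indicator {0..<\<delta>} s \<partial>lborel)"
    by (rule nn_integral_mono) (rule bound)
  also have "\<dots> = V * ennreal \<delta>"
    using \<delta> by (simp add: nn_integral_cmult_indicator)
  finally show ?thesis unfolding H_def V_def \<delta>_def by (simp add: mult.commute)
qed




context
  fixes X :: "real set" and m :: "real measure"
  assumes cX: "compact X"
    and sm: "sets m = sets (restrict_space borel X)"
    and pm: "prob_space m"
    and atom: "\<And>x. x \<in> X \<Longrightarrow> emeasure m {x} = 0"
begin

lemma osc_bound: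
  fixes p e :: real and h :: "real \<Rightarrow> complex"
  assumes p: "p \<ge> 1"
  shows "epowr (osc m h e x) p \<le> Gw (F m) X h p e (F m x)"
proof -
  define v where "v q = (if fst q \<in> X \<and> snd q \<in> X \<and> \<bar>F m (fst q) - F m x\<bar> < e \<and> \<bar>F m (snd q) - F m x\<bar> < e
      then cmod (h (fst q) - h (snd q)) else 0)" for q
  have db: "dball m x e = {y \<in> X. \<bar>F m y - F m x\<bar> < e}"
    unfolding dball_def using mdist_F[OF cX sm pm atom] space_m[OF cX sm pm atom]
    by (auto simp: abs_minus_commute)
  have "osc m h e x \<le> (SUP (y, y') \<in> (dball m x e - {}) \<times> (dball m x e - {}). ennreal (cmod (h y - h y')))"
    unfolding osc_def by (rule INF_lower) simp
  also have "\<dots> \<le> (SUP q. ennreal (v q))"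
  proof (rule SUP_least)
    fix q assume "q \<in> (dball m x e - {}) \<times> (dball m x e - {})"
    then have "v q = cmod (h (fst q) - h (snd q))" unfolding v_def db by auto
    then have "(case q of (y, y') \<Rightarrow> ennreal (cmod (h y - h y'))) = ennreal (v q)"
      by (cases q) simp
    also have "\<dots> \<le> (SUP q. ennreal (v q))" by (rule SUP_upper) simp
    finally show "(case q of (y, y') \<Rightarrow> ennreal (cmod (h y - h y'))) \<le> (SUP q. ennreal (v q))" .
  qed
  finally have "epowr (osc m h e x) p \<le> epowr (SUP q. ennreal (v q)) p"
    using p by (intro epowr_mono) auto
  also have "\<dots> \<le> (SUP q. ennreal (v q powr p))"
    by (rule epowr_SUP) (use p in \<open>auto simp: v_def\<close>)
  also have "\<dots> = Gw (F m) X h p e (F m x)"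
    unfolding Gw_def wterm_def v_def ..
  finally show ?thesis .
qed

lemma main_ctx:
  fixes p e :: real and h :: "real \<Rightarrow> complex"
  assumes p: "p \<ge> 1" and e: "e > 0"
  shows "(\<integral>\<^sup>+ x. epowr (osc m h e x) p \<partial>m) \<le> ennreal (2 * e) * epowr (pvar X p h) p"
proof -
  have "(\<integral>\<^sup>+ x. epowr (osc m h e x) p \<partial>m) \<le> (\<integral>\<^sup>+ x. Gw (F m) X h p e (F m x) \<partial>m)"
    by (rule nn_integral_mono) (rule osc_bound[OF p])
  also have "\<dots> = (\<integral>\<^sup>+ t. Gw (F m) X h p e t \<partial>(distr m borel (F m)))"
    by (rule nn_integral_distr[symmetric]) (simp_all add: F_meas[OF cX sm pm atom])
  also have "\<dots> = (\<integral>\<^sup>+ t. Gw (F m) X h p e t \<partial>N2)"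
    by (simp add: distr_F[OF cX sm pm atom])
  also have "\<dots> = (\<integral>\<^sup>+ t. indicator {0..1} t * Gw (F m) X h p e t \<partial>lborel)"
    using N2_def[OF cX sm pm atom] nn_integral_density[of "indicator {0..1}" lborel "Gw (F m) X h p e"] by simp
  also have "\<dots> \<le> ennreal (2 * e) * epowr (pvar X p h) p"
    by (rule int_bound[where F="F m", OF F_mono[OF cX sm pm atom] e p])
  finally show ?thesis .
qed

end

theorem lemma4p2:
  fixes X :: "real set" and m :: "real measure" and p e :: real and h :: "real \<Rightarrow> complex"
  assumes "compact X"
    and "sets m = sets (restrict_space borel X)"
    and "prob_space m"
    and "\<And>x. x \<in> X \<Longrightarrow> emeasure m {x} = 0"
    and "p \<ge> 1"
    and "e > 0"
  shows "(\<integral>\<^sup>+ x. epowr (osc m h e x) p \<partial>m) \<le> ennreal (2 * e) * epowr (pvar X p h) p"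
  by (rule main_ctx[OF assms])


end
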